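(* Let $p\in(0,1)$, $\beta>0$, $\mu_P,\mu_N\in\mathbb R^d$ and let $\Sigma_P,\Sigma_N$ be symmetric positive semidefinite $d\times d$ matrices. For $\alpha\in(0,1)$ let $\pi(\alpha)=\sqrt{(1-\alpha)/\alpha}$. Consider the optimization problem $$\min_{\alpha_P,\alpha_N\in(0,1),\,w\in\mathbb R^d\setminus\{0\},\,b\in\mathbb R}\ \frac{(1-p)\alpha_N+\beta^2p\,\alpha_P}{1-\alpha_P}$$ subject to $$w^T\mu_P-b\ge\pi(\alpha_P)\sqrt{w^T\Sigma_P w},\qquad b-w^T\mu_N\ge\pi(\alpha_N)\sqrt{w^T\Sigma_N w}.$$ Then the minimal value of this problem is attained at a point where both inequality constraints hold with equality; i.e., at an optimal solution $(w^\star,b^\star,\alpha_P^\star,\alpha_N^\star)$ one has $(w^\star)^T\mu_P-b^\star=\pi(\alpha_P^\star)\sqrt{(w^\star)^T\Sigma_P w^\star}$ and $b^\star-(w^\star)^T\mu_N=\pi(\alpha_N^\star)\sqrt{(w^\star)^T\Sigma_N w^\star}$.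
   Context: $\mu_P,\Sigma_P$ and $\mu_N,\Sigma_N$ are the mean and covariance matrix of the positive and negative class, respectively; $\alpha_P$ and $\alpha_N$ play the roles of worst-case false negative and false positive rates. *)

theory Defs
  imports "HOL-Analysis.Analysis"
begin

definition pi_fn :: "real \<Rightarrow> real" where
  "pi_fn \<alpha> = sqrt ((1 - \<alpha>) / \<alpha>)"

definition psd_sym :: "real ^ 'd ^ 'd \<Rightarrow> bool" where
  "psd_sym S \<longleftrightarrow> transpose S = S \<and> (\<forall>x. 0 \<le> x \<bullet> (S *v x))"

definition mpm_obj :: "real \<Rightarrow> real \<Rightarrow> real \<Rightarrow> real \<Rightarrow> real" where
  "mpm_obj p \<beta> \<alpha>P \<alpha>N = ((1 - p) * \<alpha>N + \<beta>\<^sup>2 * p * \<alpha>P) / (1 - \<alpha>P)"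

definition mpm_feasible ::
  "real ^ 'd \<Rightarrow> real ^ 'd ^ 'd \<Rightarrow> real ^ 'd \<Rightarrow> real ^ 'd ^ 'd
   \<Rightarrow> real ^ 'd \<Rightarrow> real \<Rightarrow> real \<Rightarrow> real \<Rightarrow> bool" where
  "mpm_feasible \<mu>P \<Sigma>P \<mu>N \<Sigma>N w b \<alpha>P \<alpha>N \<longleftrightarrow>
     0 < \<alpha>P \<and> \<alpha>P < 1 \<and> 0 < \<alpha>N \<and> \<alpha>N < 1 \<and> w \<noteq> 0 \<and>
     w \<bullet> \<mu>P - b \<ge> pi_fn \<alpha>P * sqrt (w \<bullet> (\<Sigma>P *v w)) \<and>
     b - w \<bullet> \<mu>N \<ge> pi_fn \<alpha>N * sqrt (w \<bullet> (\<Sigma>N *v w))"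

definition mpm_optimal ::
  "real \<Rightarrow> real \<Rightarrow> real ^ 'd \<Rightarrow> real ^ 'd ^ 'd \<Rightarrow> real ^ 'd \<Rightarrow> real ^ 'd ^ 'd
   \<Rightarrow> real ^ 'd \<Rightarrow> real \<Rightarrow> real \<Rightarrow> real \<Rightarrow> bool" where
  "mpm_optimal p \<beta> \<mu>P \<Sigma>P \<mu>N \<Sigma>N w b \<alpha>P \<alpha>N \<longleftrightarrow>
     mpm_feasible \<mu>P \<Sigma>P \<mu>N \<Sigma>N w b \<alpha>P \<alpha>N \<and>
     (\<forall>w' b' \<alpha>P' \<alpha>N'. mpm_feasible \<mu>P \<Sigma>P \<mu>N \<Sigma>N w' b' \<alpha>P' \<alpha>N' \<longrightarrow>
        mpm_obj p \<beta> \<alpha>P \<alpha>N \<le> mpm_obj p \<beta> \<alpha>P' \<alpha>N')"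

end

theory Submission
  imports Defs
begin

lemma pi_improve:
  fixes a s c :: real
  assumes a: "0 < a" "a < 1" and s: "0 \<le> s" and c: "pi_fn a * s < c"
  shows "\<exists>a'. 0 < a' \<and> a' < a \<and> pi_fn a' * s \<le> c"
proof (cases "s = 0")
  case True
  then show ?thesis using a c by (intro exI[of _ "a/2"]) auto
next
  case False
  then have sp: "0 < s" using s by simp
  define t where "t = c / s"
  have pa: "0 \<le> pi_fn a" unfolding pi_fn_def using a by simp
  have tgt: "pi_fn a < t" using c sp unfolding t_def by (simp add: field_simps)
  have t0: "0 < t" using pa tgt by linarith
  have sq: "(pi_fn a)^2 = (1 - a) / a" unfolding pi_fn_def using a by simp
  have "(pi_fn a)^2 < t^2" using tgt pa by (simp add: power_strict_mono)
  hence lt: "(1 - a) / a < t^2" using sq by simp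
  define a' where "a' = 1 / (1 + t^2)"
  have nz: "0 < 1 + t^2" by (simp add: add_pos_nonneg)
  have a'p: "0 < a'" unfolding a'_def by (simp add: add_pos_nonneg)
  have "1 - a < t^2 * a" using lt a by (simp add: field_simps)
  hence "1 < a * (1 + t^2)" by (simp add: algebra_simps)
  hence a'a: "a' < a" unfolding a'_def using nz by (simp add: field_simps)
  have "(1 - a') / a' = t^2" unfolding a'_def using nz by (simp add: field_simps)
  hence "pi_fn a' = t" unfolding pi_fn_def using t0 by simp
  hence "pi_fn a' * s = c" unfolding t_def using sp by simp
  then show ?thesis using a'p a'a by auto
qed

lemma obj_monoP:
  fixes p \<beta> a a' n :: real
  assumes "0 < p" "p < 1" "0 < \<beta>" "0 < a'" "a' < a" "a < 1" "0 < n"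
  shows "mpm_obj p \<beta> a' n < mpm_obj p \<beta> a n"
proof -
  define K where "K = (1 - p) * n"
  define M where "M = \<beta>\<^sup>2 * p"
  have K: "0 < K" unfolding K_def using assms by simp
  have M: "0 < M" unfolding M_def using assms by simp
  have "(K + M * a') * (1 - a) < (K + M * a) * (1 - a')"
  proof -
    have "(K + M * a) * (1 - a') - (K + M * a') * (1 - a) = (K + M) * (a - a')"
      by (simp add: algebra_simps)
    moreover have "0 < (K + M) * (a - a')" using K M assms by simp
    ultimately show ?thesis by linarith
  qed
  then have "(K + M * a') / (1 - a') < (K + M * a) / (1 - a)"
    using assms by (simp add: divide_simps)
  then show ?thesis unfolding mpm_obj_def K_def M_def by (simp add: mult.assoc)
qed

lemma obj_monoN:
  fixes p \<beta> a n n' :: real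
  assumes "0 < p" "p < 1" "a < 1" "n' < n"
  shows "mpm_obj p \<beta> a n' < mpm_obj p \<beta> a n"
proof -
  have "(1 - p) * n' < (1 - p) * n" using assms by simp
  then show ?thesis unfolding mpm_obj_def using assms by (simp add: divide_strict_right_mono)
qed

theorem lemma4:
  fixes p \<beta> :: real and \<mu>P \<mu>N :: "real ^ 'd" and \<Sigma>P \<Sigma>N :: "real ^ 'd ^ 'd"
    and w :: "real ^ 'd" and b \<alpha>P \<alpha>N :: real
  assumes "0 < p" "p < 1" "0 < \<beta>"
    and "psd_sym \<Sigma>P" "psd_sym \<Sigma>N"
    and "mpm_optimal p \<beta> \<mu>P \<Sigma>P \<mu>N \<Sigma>N w b \<alpha>P \<alpha>N"
  shows "w \<bullet> \<mu>P - b = pi_fn \<alpha>P * sqrt (w \<bullet> (\<Sigma>P *v w))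
       \<and> b - w \<bullet> \<mu>N = pi_fn \<alpha>N * sqrt (w \<bullet> (\<Sigma>N *v w))"
proof -
  have F: "mpm_feasible \<mu>P \<Sigma>P \<mu>N \<Sigma>N w b \<alpha>P \<alpha>N"
    and opt: "\<And>w' b' aP aN. mpm_feasible \<mu>P \<Sigma>P \<mu>N \<Sigma>N w' b' aP aN \<Longrightarrow>
        mpm_obj p \<beta> \<alpha>P \<alpha>N \<le> mpm_obj p \<beta> aP aN"
    using assms(6) unfolding mpm_optimal_def by auto
  note f = F[unfolded mpm_feasible_def]
  show ?thesis
  proof
    show "w \<bullet> \<mu>P - b = pi_fn \<alpha>P * sqrt (w \<bullet> (\<Sigma>P *v w))"
    proof (rule ccontr)
      assume "w \<bullet> \<mu>P - b \<noteq> pi_fn \<alpha>P * sqrt (w \<bullet> (\<Sigma>P *v w))"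
      hence "pi_fn \<alpha>P * sqrt (w \<bullet> (\<Sigma>P *v w)) < w \<bullet> \<mu>P - b" using f by linarith
      moreover have "0 \<le> sqrt (w \<bullet> (\<Sigma>P *v w))"
        using assms(4) unfolding psd_sym_def by simp
      ultimately obtain a' where a': "0 < a'" "a' < \<alpha>P"
          "pi_fn a' * sqrt (w \<bullet> (\<Sigma>P *v w)) \<le> w \<bullet> \<mu>P - b"
        using pi_improve[of \<alpha>P] f by blast
      have "mpm_feasible \<mu>P \<Sigma>P \<mu>N \<Sigma>N w b a' \<alpha>N"
        unfolding mpm_feasible_def using f a' by auto
      from opt[OF this] obj_monoP[of p \<beta> a' \<alpha>P \<alpha>N] assms a' f show False by linarith
    qed
  next
    show "b - w \<bullet> \<mu>N = pi_fn \<alpha>N * sqrt (w \<bullet> (\<Sigma>N *v w))"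
    proof (rule ccontr)
      assume "b - w \<bullet> \<mu>N \<noteq> pi_fn \<alpha>N * sqrt (w \<bullet> (\<Sigma>N *v w))"
      hence "pi_fn \<alpha>N * sqrt (w \<bullet> (\<Sigma>N *v w)) < b - w \<bullet> \<mu>N" using f by linarith
      moreover have "0 \<le> sqrt (w \<bullet> (\<Sigma>N *v w))"
        using assms(5) unfolding psd_sym_def by simp
      ultimately obtain a' where a': "0 < a'" "a' < \<alpha>N"
          "pi_fn a' * sqrt (w \<bullet> (\<Sigma>N *v w)) \<le> b - w \<bullet> \<mu>N"
        using pi_improve[of \<alpha>N] f by blast
      have "mpm_feasible \<mu>P \<Sigma>P \<mu>N \<Sigma>N w b \<alpha>P a'"
        unfolding mpm_feasible_def using f a' by auto
      from opt[OF this] obj_monoN[of p \<alpha>P a' \<alpha>N \<beta>] assms a' f show False by linarith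
    qed
  qed
qed

end
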